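(* Let $a>1$, $d\ge 4$, and let $G$ be generated by the security model $\mathcal{S}(n,a,d)$. Let $T_1=\log^{a+1} n$ and let $C_t$ be the set of colors appearing in $G_t$ (the graph at the end of time step $t$). Then with probability $1-o(1)$, for all $t$ with $T_1\le t\le n$, $$\frac{t}{2\log^a t}\le |C_t|\le \frac{2t}{\log^a t}.$$
   Context: Security model $\mathcal{S}(n,a,d)$ (homophyly exponent $a$, natural number $d$): start with an initial graph $G_2$ on two nodes, each of which is a seed node with its own distinct color. For $i=3,\dots,n$, given $G_{i-1}$, let $p_i=(\log i)^{-a}$ and create a new node $v$. With probability $p_i$, $v$ receives a brand-new color $c$ and is called the seed node of $c$; then one edge $(v,u)$ is added with $u$ chosen with probability proportional to degrees in $G_{i-1}$, and $d-1$ edges $(v,u_j)$ are added, each $u_j$ chosen uniformly at random among all seed nodes of $G_{i-1}$. Otherwise, $v$ picks a color $c$ uniformly at random among all colors present in $G_{i-1}$, takes color $c$, and $d$ edges $(v,u_j)$ are added, each $u_j$ chosen with probability proportional to degree among the nodes of color $c$ in $G_{i-1}$. The network is $G=G_n$, and step $i$ is the step creating the $i$-th node. *)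

theory Defs
  imports "HOL-Probability.Probability"
begin

text \<open>Nodes are 0,1,2,... in order of creation;
  colors are 0,1,2,... in order of creation.
  cols ! v  = color of node v;
  seeds ! c = the seed node of color c;
  edges     = list (multiset) of edges (v, u), v the newer endpoint.\<close>
record sm_state =
  cols  :: "nat list"
  seeds :: "nat list"
  edges :: "(nat \<times> nat) list"

definition endpoints :: "sm_state \<Rightarrow> nat multiset" where
  "endpoints s = mset (concat (map (\<lambda>(u, v). [u, v]) (edges s)))"

definition deg_pmf :: "sm_state \<Rightarrow> nat pmf" where
  "deg_pmf s = pmf_of_multiset (endpoints s)"

definition deg_color_pmf :: "sm_state \<Rightarrow> nat \<Rightarrow> nat pmf" where
  "deg_color_pmf s c = pmf_of_multiset (filter_mset (\<lambda>v. cols s ! v = c) (endpoints s))"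

primrec iid_pmf :: "nat \<Rightarrow> 'a pmf \<Rightarrow> 'a list pmf" where
  "iid_pmf 0 p = return_pmf []"
| "iid_pmf (Suc k) p = bind_pmf p (\<lambda>x. bind_pmf (iid_pmf k p) (\<lambda>xs. return_pmf (x # xs)))"

text \<open>step i of S(n,a,d): creates the i-th node (index i-1) from G_{i-1}\<close>
definition sm_step :: "real \<Rightarrow> nat \<Rightarrow> nat \<Rightarrow> sm_state \<Rightarrow> sm_state pmf" where
  "sm_step a d i s =
     bind_pmf (bernoulli_pmf (ln (real i) powr (- a))) (\<lambda>b.
       let v = length (cols s) in
       if b then
         bind_pmf (deg_pmf s) (\<lambda>u.
         bind_pmf (iid_pmf (d - 1) (pmf_of_set (set (seeds s)))) (\<lambda>us.
           return_pmf \<lparr> cols = cols s @ [length (seeds s)],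
                        seeds = seeds s @ [v],
                        edges = edges s @ map (\<lambda>w. (v, w)) (u # us) \<rparr>))
       else
         bind_pmf (pmf_of_set {..<length (seeds s)}) (\<lambda>c.
         bind_pmf (iid_pmf d (deg_color_pmf s c)) (\<lambda>us.
           return_pmf \<lparr> cols = cols s @ [c],
                        seeds = seeds s,
                        edges = edges s @ map (\<lambda>w. (v, w)) us \<rparr>)))"

definition G2 :: sm_state where
  "G2 = \<lparr> cols = [0, 1], seeds = [0, 1], edges = [(0, 1)] \<rparr>"

text \<open>distribution of G_n (for n \<le> 2 this is G_2)\<close>
primrec sm_gen :: "real \<Rightarrow> nat \<Rightarrow> nat \<Rightarrow> sm_state pmf" where
  "sm_gen a d 0 = return_pmf G2"
| "sm_gen a d (Suc n) =
     (if Suc n \<le> 2 then return_pmf G2 else bind_pmf (sm_gen a d n) (sm_step a d (Suc n)))"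

text \<open>C_t: the colors appearing in G_t, i.e. among the first t nodes of G = G_n\<close>
definition colors_at :: "sm_state \<Rightarrow> nat \<Rightarrow> nat set" where
  "colors_at G t = {cols G ! v | v. v < t}"

end

theory Submission
  imports Defs "HOL-Real_Asymp.Real_Asymp"
begin

lemma set_bind_obtain: "x \<in> set_pmf (bind_pmf M F) \<Longrightarrow> \<exists>b. x \<in> set_pmf (F b)"
  by auto

definition inv_s :: "sm_state \<Rightarrow> bool" where
  "inv_s s \<longleftrightarrow> seeds s \<noteq> [] \<and> set (cols s) = {..<length (seeds s)}"

lemma supp2: "x \<in> set_pmf (bind_pmf P (\<lambda>u. bind_pmf (Q u) (\<lambda>us. return_pmf (R u us))))
   \<Longrightarrow> \<exists>u\<in>set_pmf P. \<exists>us. x = R u us"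
  by auto

lemma step_cases:
  "x \<in> set_pmf (sm_step a d i s) \<Longrightarrow>
   (\<exists>u us. x = \<lparr> cols = cols s @ [length (seeds s)],
                        seeds = seeds s @ [length (cols s)],
                        edges = edges s @ map (\<lambda>w. (length (cols s), w)) (u # us) \<rparr>) \<or>
   (\<exists>c\<in>set_pmf (pmf_of_set {..<length (seeds s)}). \<exists>us. x = \<lparr> cols = cols s @ [c],
                        seeds = seeds s,
                        edges = edges s @ map (\<lambda>w. (length (cols s), w)) us \<rparr>)"
  unfolding sm_step_def Let_def
  apply (drule set_bind_obtain)
  apply (erule exE)
  subgoal for b
    apply (induct b)
     apply (simp only: if_True)
     apply (rule disjI1)
     apply (drule supp2) apply blast
    apply (simp only: if_False)
    apply (rule disjI2)
    apply (drule supp2) apply blast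
    done
  done


lemma step_support:
  assumes "inv_s s" "x \<in> set_pmf (sm_step a d i s)"
  shows "inv_s x \<and> (\<exists>c. cols x = cols s @ [c])"
proof -
  have ne: "{..<length (seeds s)} \<noteq> {}" and st: "set (cols s) = {..<length (seeds s)}"
    and sne: "seeds s \<noteq> []"
    using assms(1) unfolding inv_s_def by auto
  have fin: "finite {..<length (seeds s)}" by simp
  from step_cases[OF assms(2)] show ?thesis
  proof
    assume "\<exists>u us. x = \<lparr> cols = cols s @ [length (seeds s)],
                        seeds = seeds s @ [length (cols s)],
                        edges = edges s @ map (\<lambda>w. (length (cols s), w)) (u # us) \<rparr>"
    then have c: "cols x = cols s @ [length (seeds s)]" and sd: "seeds x = seeds s @ [length (cols s)]"
      by (elim exE, simp)+
    have "set (cols x) = {..<length (seeds x)}"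
      unfolding c sd set_append st by (simp add: lessThan_Suc)
    then show ?thesis unfolding inv_s_def using c sd by simp
  next
    assume "\<exists>c\<in>set_pmf (pmf_of_set {..<length (seeds s)}). \<exists>us. x = \<lparr> cols = cols s @ [c],
                        seeds = seeds s,
                        edges = edges s @ map (\<lambda>w. (length (cols s), w)) us \<rparr>"
    then obtain c us where cl: "c < length (seeds s)" and xe: "x = \<lparr> cols = cols s @ [c],
                        seeds = seeds s,
                        edges = edges s @ map (\<lambda>w. (length (cols s), w)) us \<rparr>"
      unfolding set_pmf_of_set[OF ne fin] by blast
    have c: "cols x = cols s @ [c]" and sd: "seeds x = seeds s" using xe by simp_all
    have "set (cols x) = {..<length (seeds x)}"
      unfolding c sd set_append st using cl by auto
    then show ?thesis unfolding inv_s_def using c sd sne by simp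
  qed
qed

lemma map_pmf_const_on:
  assumes "\<And>x. x \<in> set_pmf M \<Longrightarrow> f x = c"
  shows "map_pmf f M = return_pmf c"
proof -
  have "map_pmf f M = map_pmf (\<lambda>_. c) M" by (rule map_pmf_cong) (auto simp: assms)
  then show ?thesis by simp
qed

definition pp :: "real \<Rightarrow> nat \<Rightarrow> real" where
  "pp a i = ln (real i) powr (- a)"

lemma step_card:
  assumes "inv_s s"
  shows "map_pmf (\<lambda>x. card (set (cols x))) (sm_step a d i s)
       = map_pmf (\<lambda>b. card (set (cols s)) + (if b then 1 else 0)) (bernoulli_pmf (pp a i))"
proof -
  have ne: "{..<length (seeds s)} \<noteq> {}" and st: "set (cols s) = {..<length (seeds s)}"
    using assms unfolding inv_s_def by auto
  have fin: "finite {..<length (seeds s)}" by simp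
  have cs: "card (set (cols s)) = length (seeds s)" unfolding st by simp
  have T: "map_pmf (\<lambda>x. card (set (cols x))) (bind_pmf (deg_pmf s) (\<lambda>u.
         bind_pmf (iid_pmf (d - 1) (pmf_of_set (set (seeds s)))) (\<lambda>us.
           return_pmf \<lparr> cols = cols s @ [length (seeds s)],
                        seeds = seeds s @ [length (cols s)],
                        edges = edges s @ map (\<lambda>w. (length (cols s), w)) (u # us) \<rparr>)))
       = return_pmf (card (set (cols s)) + 1)"
  proof (rule map_pmf_const_on)
    fix x assume "x \<in> set_pmf (bind_pmf (deg_pmf s) (\<lambda>u.
         bind_pmf (iid_pmf (d - 1) (pmf_of_set (set (seeds s)))) (\<lambda>us.
           return_pmf \<lparr> cols = cols s @ [length (seeds s)],
                        seeds = seeds s @ [length (cols s)],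
                        edges = edges s @ map (\<lambda>w. (length (cols s), w)) (u # us) \<rparr>)))"
    from supp2[OF this] have c: "cols x = cols s @ [length (seeds s)]"
      by (elim bexE exE) simp
    show "card (set (cols x)) = card (set (cols s)) + 1"
      unfolding c set_append st cs by simp
  qed
  have F: "map_pmf (\<lambda>x. card (set (cols x))) (bind_pmf (pmf_of_set {..<length (seeds s)}) (\<lambda>c.
         bind_pmf (iid_pmf d (deg_color_pmf s c)) (\<lambda>us.
           return_pmf \<lparr> cols = cols s @ [c],
                        seeds = seeds s,
                        edges = edges s @ map (\<lambda>w. (length (cols s), w)) us \<rparr>)))
       = return_pmf (card (set (cols s)))"
  proof (rule map_pmf_const_on)
    fix x assume "x \<in> set_pmf (bind_pmf (pmf_of_set {..<length (seeds s)}) (\<lambda>c.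
         bind_pmf (iid_pmf d (deg_color_pmf s c)) (\<lambda>us.
           return_pmf \<lparr> cols = cols s @ [c],
                        seeds = seeds s,
                        edges = edges s @ map (\<lambda>w. (length (cols s), w)) us \<rparr>)))"
    from supp2[OF this] have "\<exists>c. c \<in> set_pmf (pmf_of_set {..<length (seeds s)}) \<and> cols x = cols s @ [c]"
      by (elim bexE exE) simp
    then obtain c where cl: "c \<in> set_pmf (pmf_of_set {..<length (seeds s)})" and c: "cols x = cols s @ [c]"
      by blast
    from cl have "c < length (seeds s)" unfolding set_pmf_of_set[OF ne fin] by simp
    then show "card (set (cols x)) = card (set (cols s))"
      unfolding c set_append st by (simp add: insert_absorb)
  qed
  have "map_pmf (\<lambda>x. card (set (cols x))) (sm_step a d i s) = bind_pmf (bernoulli_pmf (pp a i))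
     (\<lambda>b. return_pmf (card (set (cols s)) + (if b then 1 else 0)))"
    unfolding sm_step_def Let_def map_bind_pmf pp_def
  proof (rule bind_pmf_cong[OF refl])
    fix b :: bool
    show "map_pmf (\<lambda>x. card (set (cols x))) (if b then bind_pmf (deg_pmf s) (\<lambda>u.
         bind_pmf (iid_pmf (d - 1) (pmf_of_set (set (seeds s)))) (\<lambda>us.
           return_pmf \<lparr> cols = cols s @ [length (seeds s)],
                        seeds = seeds s @ [length (cols s)],
                        edges = edges s @ map (\<lambda>w. (length (cols s), w)) (u # us) \<rparr>))
       else bind_pmf (pmf_of_set {..<length (seeds s)}) (\<lambda>c.
         bind_pmf (iid_pmf d (deg_color_pmf s c)) (\<lambda>us.
           return_pmf \<lparr> cols = cols s @ [c],
                        seeds = seeds s,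
                        edges = edges s @ map (\<lambda>w. (length (cols s), w)) us \<rparr>)))
       = return_pmf (card (set (cols s)) + (if b then 1 else 0))"
      by (cases b) (simp_all only: if_True if_False T F, simp_all)
  qed
  then show ?thesis by (simp add: map_pmf_def)
qed

lemma G2_inv: "inv_s G2" unfolding inv_s_def G2_def by auto

lemma gen_support: "x \<in> set_pmf (sm_gen a d n) \<Longrightarrow> inv_s x \<and> length (cols x) = max 2 n"
proof (induction n arbitrary: x)
  case 0
  then show ?case using G2_inv by (simp add: G2_def)
next
  case (Suc n)
  show ?case
  proof (cases "Suc n \<le> 2")
    case True
    then have "x = G2" using Suc.prems by simp
    then show ?thesis using G2_inv True by (simp add: G2_def)
  next
    case False
    then obtain s where s: "s \<in> set_pmf (sm_gen a d n)" and xs: "x \<in> set_pmf (sm_step a d (Suc n) s)"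
      using Suc.prems by auto
    from Suc.IH[OF s] have i: "inv_s s" and l: "length (cols s) = max 2 n" by auto
    from step_support[OF i xs] obtain c where "inv_s x" "cols x = cols s @ [c]" by blast
    then show ?thesis using l False by simp
  qed
qed

lemma gen_prefix: "2 \<le> t \<Longrightarrow> t \<le> n \<Longrightarrow>
  map_pmf (\<lambda>G. take t (cols G)) (sm_gen a d n) = map_pmf cols (sm_gen a d t)"
proof (induction n)
  case 0
  then show ?case by simp
next
  case (Suc n)
  show ?case
  proof (cases "t = Suc n")
    case True
    show ?thesis
    proof (rule map_pmf_cong)
      fix G assume "G \<in> set_pmf (sm_gen a d t)"
      from gen_support[OF this] have "length (cols G) = t" using Suc.prems by simp
      then show "take t (cols G) = cols G" by simp
    qed (simp add: True)
  next
    case False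
    with Suc.prems have tn: "t \<le> n" and n2: "\<not> Suc n \<le> 2" by auto
    have "map_pmf (\<lambda>G. take t (cols G)) (sm_gen a d (Suc n))
        = bind_pmf (sm_gen a d n) (\<lambda>s. map_pmf (\<lambda>G. take t (cols G)) (sm_step a d (Suc n) s))"
      using n2 by (simp add: map_bind_pmf)
    also have "\<dots> = bind_pmf (sm_gen a d n) (\<lambda>s. return_pmf (take t (cols s)))"
    proof (rule bind_pmf_cong[OF refl])
      fix s assume s: "s \<in> set_pmf (sm_gen a d n)"
      from gen_support[OF s] have i: "inv_s s" and l: "length (cols s) = max 2 n" by auto
      show "map_pmf (\<lambda>G. take t (cols G)) (sm_step a d (Suc n) s) = return_pmf (take t (cols s))"
      proof (rule map_pmf_const_on)
        fix x assume "x \<in> set_pmf (sm_step a d (Suc n) s)"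
        from step_support[OF i this] obtain c where "cols x = cols s @ [c]" by blast
        then show "take t (cols x) = take t (cols s)" using l tn by simp
      qed
    qed
    also have "\<dots> = map_pmf (\<lambda>G. take t (cols G)) (sm_gen a d n)" by (simp add: map_pmf_def)
    also have "\<dots> = map_pmf cols (sm_gen a d t)" using Suc.IH Suc.prems tn by simp
    finally show ?thesis .
  qed
qed

definition Kd :: "real \<Rightarrow> nat \<Rightarrow> nat \<Rightarrow> nat pmf" where
  "Kd a d t = map_pmf (\<lambda>G. card (set (cols G))) (sm_gen a d t)"

lemma Kd_Suc: "2 \<le> t \<Longrightarrow> Kd a d (Suc t) =
   bind_pmf (Kd a d t) (\<lambda>k. map_pmf (\<lambda>b. k + (if b then 1 else 0)) (bernoulli_pmf (pp a (Suc t))))"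
proof -
  assume t: "2 \<le> t"
  have "Kd a d (Suc t) = bind_pmf (sm_gen a d t)
      (\<lambda>s. map_pmf (\<lambda>x. card (set (cols x))) (sm_step a d (Suc t) s))"
    using t by (simp add: Kd_def map_bind_pmf)
  also have "\<dots> = bind_pmf (sm_gen a d t)
      (\<lambda>s. map_pmf (\<lambda>b. card (set (cols s)) + (if b then 1 else 0)) (bernoulli_pmf (pp a (Suc t))))"
    by (rule bind_pmf_cong[OF refl], rule step_card) (use gen_support in blast)
  also have "\<dots> = bind_pmf (Kd a d t) (\<lambda>k. map_pmf (\<lambda>b. k + (if b then 1 else 0)) (bernoulli_pmf (pp a (Suc t))))"
    by (simp add: Kd_def bind_map_pmf)
  finally show ?thesis .
qed

lemma Kd_2: "Kd a d 2 = return_pmf 2"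
  by (simp add: Kd_def G2_def numeral_2_eq_2)

lemma ln3_ge1: "1 \<le> ln (3::real)"
proof -
  have "exp (1::real) \<le> 1 + 1 + 1\<^sup>2" by (rule exp_bound) auto
  then have "exp (1::real) \<le> 3" by simp
  then show ?thesis by (subst ln_ge_iff) auto
qed

lemma ln_ge1: "3 \<le> i \<Longrightarrow> 1 \<le> ln (real i)"
proof -
  assume "3 \<le> i"
  then have "ln (3::real) \<le> ln (real i)" by (subst ln_le_cancel_iff) auto
  then show ?thesis using ln3_ge1 by linarith
qed

lemma pp_bounds: "0 \<le> a \<Longrightarrow> 3 \<le> i \<Longrightarrow> 0 \<le> pp a i \<and> pp a i \<le> 1"
proof -
  assume a: "0 \<le> a" and i: "3 \<le> i"
  have l: "1 \<le> ln (real i)" using ln_ge1[OF i] .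
  have "1 \<le> ln (real i) powr a" by (rule ge_one_powr_ge_zero[OF l a])
  moreover have "pp a i = 1 / ln (real i) powr a" unfolding pp_def using l by (simp add: powr_minus_divide)
  ultimately show ?thesis by (simp add: divide_le_eq_1)
qed

lemma bern_inner:
  assumes "0 \<le> p" "p \<le> 1" "0 \<le> z"
  shows "(\<integral>\<^sup>+b. ennreal (z ^ (k + (if b then 1 else 0))) \<partial>bernoulli_pmf p) = ennreal (1 - p + p * z) * ennreal (z ^ k)"
proof -
  have "(\<integral>\<^sup>+b. ennreal (z ^ (k + (if b then 1 else 0))) \<partial>bernoulli_pmf p)
      = ennreal (z ^ (k + 1)) * ennreal p + ennreal (z ^ k) * ennreal (1 - p)"
    using assms by (subst nn_integral_bernoulli_pmf) auto
  also have "\<dots> = ennreal (z ^ (k + 1) * p + z ^ k * (1 - p))"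
    using assms by (simp add: ennreal_mult ennreal_plus)
  also have "z ^ (k + 1) * p + z ^ k * (1 - p) = (1 - p + p * z) * z ^ k" by (simp add: algebra_simps)
  also have "ennreal \<dots> = ennreal (1 - p + p * z) * ennreal (z ^ k)"
    using assms by (subst ennreal_mult) auto
  finally show ?thesis .
qed

lemma Kd_mgf:
  assumes a: "0 \<le> a" and z: "0 \<le> z" and t: "2 \<le> t"
  shows "(\<integral>\<^sup>+k. ennreal (z ^ k) \<partial>Kd a d t) = ennreal (z^2 * (\<Prod>i\<in>{3..t}. 1 - pp a i + pp a i * z))"
  using t
proof (induction t rule: nat_induct_at_least)
  case base
  then show ?case by (simp add: Kd_2)
next
  case (Suc t)
  have pb: "0 \<le> pp a (Suc t)" "pp a (Suc t) \<le> 1" using pp_bounds[OF a, of "Suc t"] Suc.hyps by auto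
  have c0: "0 \<le> 1 - pp a (Suc t) + pp a (Suc t) * z" using pb z by (simp add: add_nonneg_nonneg)
  have P0: "0 \<le> (\<Prod>i\<in>{3..t}. 1 - pp a i + pp a i * z)"
  proof (rule prod_nonneg)
    fix i assume "i \<in> {3..t}"
    then have "0 \<le> pp a i" "pp a i \<le> 1" using pp_bounds[OF a, of i] by auto
    then show "0 \<le> 1 - pp a i + pp a i * z" using z by (simp add: add_nonneg_nonneg)
  qed
  have "(\<integral>\<^sup>+k. ennreal (z ^ k) \<partial>Kd a d (Suc t))
      = (\<integral>\<^sup>+k. (\<integral>\<^sup>+b. ennreal (z ^ (k + (if b then 1 else 0))) \<partial>bernoulli_pmf (pp a (Suc t))) \<partial>Kd a d t)"
    using Suc.hyps by (simp add: Kd_Suc)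
  also have "\<dots> = (\<integral>\<^sup>+k. ennreal (1 - pp a (Suc t) + pp a (Suc t) * z) * ennreal (z ^ k) \<partial>Kd a d t)"
    using bern_inner[OF pb z] by simp
  also have "\<dots> = ennreal (1 - pp a (Suc t) + pp a (Suc t) * z) * (\<integral>\<^sup>+k. ennreal (z ^ k) \<partial>Kd a d t)"
    by (rule nn_integral_cmult) simp
  also have "\<dots> = ennreal (1 - pp a (Suc t) + pp a (Suc t) * z) * ennreal (z^2 * (\<Prod>i\<in>{3..t}. 1 - pp a i + pp a i * z))"
    using Suc.IH by simp
  also have "\<dots> = ennreal (z^2 * (\<Prod>i\<in>{3..Suc t}. 1 - pp a i + pp a i * z))"
    using Suc.hyps c0 P0 z by (subst ennreal_mult[symmetric]) (auto simp: algebra_simps)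
  finally show ?case .
qed

lemma tail_bound:
  fixes M :: "nat pmf"
  assumes mgf: "(\<integral>\<^sup>+k. ennreal (z ^ k) \<partial>M) \<le> ennreal B" and w: "0 < w" and B: "0 \<le> B"
    and z: "0 \<le> z" and A: "\<And>k. k \<in> A \<Longrightarrow> w \<le> z ^ k"
  shows "measure_pmf.prob M A \<le> B / w"
proof -
  have "emeasure M A = (\<integral>\<^sup>+k. indicator A k \<partial>M)" by simp
  also have "\<dots> \<le> (\<integral>\<^sup>+k. ennreal (1 / w) * ennreal (z ^ k) \<partial>M)"
  proof (rule nn_integral_mono)
    fix k
    show "indicator A k \<le> ennreal (1 / w) * ennreal (z ^ k)"
    proof (cases "k \<in> A")
      case True
      then have "1 \<le> (1 / w) * z ^ k" using A[OF True] w by (simp add: field_simps)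
      then have le: "ennreal 1 \<le> ennreal ((1 / w) * z ^ k)" by (rule ennreal_leI)
      have eq: "ennreal ((1/w) * z^k) = ennreal (1/w) * ennreal (z^k)"
        by (rule ennreal_mult) (use w z in auto)
      have ind: "indicator A k = (1::ennreal)" using True by simp
      show ?thesis unfolding ind using le eq by (metis ennreal_1)
    qed simp
  qed
  also have "\<dots> = ennreal (1 / w) * (\<integral>\<^sup>+k. ennreal (z ^ k) \<partial>M)"
    by (rule nn_integral_cmult) simp
  also have "\<dots> \<le> ennreal (1 / w) * ennreal B" using mgf by (rule mult_left_mono) simp
  also have "\<dots> = ennreal (B / w)" using w B by (simp add: ennreal_mult[symmetric])
  finally have "ennreal (measure_pmf.prob M A) \<le> ennreal (B / w)"
    by (simp add: measure_pmf.emeasure_eq_measure)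
  then show ?thesis using w B by (simp add: ennreal_le_iff)
qed

definition SS :: "real \<Rightarrow> nat \<Rightarrow> real" where
  "SS a t = (\<Sum>i\<in>{3..t}. pp a i)"

lemma ln2_ge: "(3/5) \<le> ln (2::real)"
proof -
  have "exp ((3/5)::real) \<le> 1 + (3/5) + (3/5)\<^sup>2" by (rule exp_bound) auto
  then have "exp ((3/5)::real) \<le> 2" by (simp add: power2_eq_square)
  then show ?thesis by (subst ln_ge_iff) auto
qed

lemma ln2_le: "ln (2::real) \<le> (3/4)"
proof -
  have "1 + (3/4) + (3/4)\<^sup>2 / 2 \<le> exp ((3/4)::real)" by (rule exp_lower_Taylor_quadratic) auto
  then have "2 \<le> exp ((3/4)::real)" by (simp add: power2_eq_square)
  then have "ln (2::real) \<le> ln (exp (3/4))" by (subst ln_le_cancel_iff) auto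
  then show ?thesis by simp
qed

lemma upper_tail:
  assumes a: "0 \<le> a" and t: "2 \<le> t" and m: "0 < m" and S: "SS a t \<le> (11/10) * m"
  shows "measure_pmf.prob (Kd a d t) {k. 2 * m < real k} \<le> 4 * exp (- m / 10)"
proof -
  have P: "(\<Prod>i\<in>{3..t}. 1 - pp a i + pp a i * 2) \<le> exp (SS a t)"
  proof -
    have "(\<Prod>i\<in>{3..t}. 1 - pp a i + pp a i * 2) \<le> (\<Prod>i\<in>{3..t}. exp (pp a i))"
    proof (rule prod_mono)
      fix i assume "i \<in> {3..t}"
      then have "0 \<le> pp a i" using pp_bounds[OF a, of i] by auto
      then show "0 \<le> 1 - pp a i + pp a i * 2 \<and> 1 - pp a i + pp a i * 2 \<le> exp (pp a i)"
        using exp_ge_add_one_self[of "pp a i"] by (intro conjI) linarith+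
    qed
    also have "\<dots> = exp (SS a t)" unfolding SS_def by (simp add: exp_sum)
    finally show ?thesis .
  qed
  have mgf: "(\<integral>\<^sup>+k. ennreal (2 ^ k) \<partial>Kd a d t) \<le> ennreal (4 * exp (SS a t))"
    unfolding Kd_mgf[OF a _ t, of 2, simplified] using P by (intro ennreal_leI) simp
  have "measure_pmf.prob (Kd a d t) {k. 2 * m < real k} \<le> 4 * exp (SS a t) / exp (2 * m * ln 2)"
  proof (rule tail_bound[OF mgf])
    fix k assume "k \<in> {k. 2 * m < real k}"
    then have "exp (2 * m * ln 2) \<le> exp (real k * ln 2)" by (simp add: mult_right_mono)
    also have "\<dots> = 2 ^ k" by (simp add: exp_of_nat_mult)
    finally show "exp (2 * m * ln 2) \<le> 2 ^ k" .
  qed auto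
  also have "\<dots> = 4 * exp (SS a t - 2 * m * ln 2)" by (simp add: exp_diff)
  also have "\<dots> \<le> 4 * exp (- m / 10)"
  proof -
    have "m * (3/5) \<le> m * ln 2" using m ln2_ge by (intro mult_left_mono) auto
    then have "SS a t - 2 * m * ln 2 \<le> - m / 10" using S by linarith
    then show ?thesis by simp
  qed
  finally show ?thesis .
qed

lemma lower_tail:
  assumes a: "0 \<le> a" and t: "2 \<le> t" and m: "0 < m" and S: "(19/20) * m \<le> SS a t"
  shows "measure_pmf.prob (Kd a d t) {k. real k < m / 2} \<le> exp (- m / 10)"
proof -
  have P: "(\<Prod>i\<in>{3..t}. 1 - pp a i + pp a i * (1/2)) \<le> exp (- SS a t / 2)"
  proof -
    have "(\<Prod>i\<in>{3..t}. 1 - pp a i + pp a i * (1/2)) \<le> (\<Prod>i\<in>{3..t}. exp (- pp a i / 2))"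
    proof (rule prod_mono)
      fix i assume "i \<in> {3..t}"
      then have "0 \<le> pp a i" "pp a i \<le> 1" using pp_bounds[OF a, of i] by auto
      then show "0 \<le> 1 - pp a i + pp a i * (1/2) \<and> 1 - pp a i + pp a i * (1/2) \<le> exp (- pp a i / 2)"
        using exp_ge_add_one_self[of "- pp a i / 2"] by (intro conjI) linarith+
    qed
    also have "\<dots> = exp (- SS a t / 2)" unfolding SS_def
      by (simp add: exp_sum[symmetric] sum_negf sum_divide_distrib)
    finally show ?thesis .
  qed
  have mgf: "(\<integral>\<^sup>+k. ennreal ((1/2) ^ k) \<partial>Kd a d t) \<le> ennreal (1/4 * exp (- SS a t / 2))"
    unfolding Kd_mgf[OF a _ t, of "1/2", simplified] using P by (intro ennreal_leI) (simp add: power2_eq_square)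
  have "measure_pmf.prob (Kd a d t) {k. real k < m / 2} \<le> 1/4 * exp (- SS a t / 2) / exp (- (m / 2) * ln 2)"
  proof (rule tail_bound[OF mgf])
    fix k assume "k \<in> {k. real k < m / 2}"
    then have "exp (- (m / 2) * ln 2) \<le> exp (real k * (- ln 2))" by simp
    also have "\<dots> = (1/2) ^ k" by (simp add: exp_of_nat_mult exp_minus ln_div power_one_over inverse_eq_divide)
    finally show "exp (- (m / 2) * ln 2) \<le> (1/2) ^ k" .
  qed auto
  also have "\<dots> = 1/4 * (exp (- SS a t / 2) / exp (- (m / 2) * ln 2))" by simp
  also have "\<dots> = 1/4 * exp (- SS a t / 2 + (m / 2) * ln 2)" by (subst exp_diff[symmetric]) simp
  also have "\<dots> \<le> exp (- m / 10)"
  proof -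
    have "m * ln 2 \<le> m * (3/4)" using m ln2_le by (intro mult_left_mono) auto
    then have "- SS a t / 2 + (m / 2) * ln 2 \<le> - m / 10" using S by linarith
    then have "exp (- SS a t / 2 + (m / 2) * ln 2) \<le> exp (- m / 10)" by simp
    then show ?thesis using exp_gt_zero[of "- SS a t / 2 + (m / 2) * ln 2"] by linarith
  qed
  finally show ?thesis .
qed

lemma SS_lower:
  assumes a: "0 \<le> a" and t: "40 \<le> t"
  shows "(19/20) * (real t / ln (real t) powr a) \<le> SS a t"
proof -
  have lt: "1 \<le> ln (real t)" using ln_ge1[of t] t by simp
  have "(\<Sum>i\<in>{3..t}. ln (real t) powr (- a)) \<le> SS a t"
    unfolding SS_def pp_def
  proof (rule sum_mono)
    fix i assume i: "i \<in> {3..t}"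
    then have "1 \<le> ln (real i)" using ln_ge1[of i] by simp
    moreover have "ln (real i) \<le> ln (real t)" using i by (subst ln_le_cancel_iff) auto
    ultimately show "ln (real t) powr (- a) \<le> ln (real i) powr (- a)"
      using a by (intro powr_mono2') auto
  qed
  moreover have "(\<Sum>i\<in>{3..t}. ln (real t) powr (- a)) = real (t - 2) * (1 / ln (real t) powr a)"
    using lt by (simp add: powr_minus_divide)
  moreover have "(19/20) * (real t / ln (real t) powr a) \<le> real (t - 2) * (1 / ln (real t) powr a)"
  proof -
    have p: "0 < ln (real t) powr a" using lt by simp
    have h: "(19/20) * real t \<le> real (t - 2)" using t by (simp add: of_nat_diff)
    have "(19/20) * (real t / ln (real t) powr a) = ((19/20) * real t) / ln (real t) powr a" by simp
    also have "\<dots> \<le> real (t - 2) / ln (real t) powr a" using h p by (intro divide_right_mono) auto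
    also have "\<dots> = real (t - 2) * (1 / ln (real t) powr a)" by simp
    finally show ?thesis .
  qed
  ultimately show ?thesis by linarith
qed

lemma SS_upper_aux:
  assumes a: "0 < a" and q: "q = (21/20) powr (- 1 / a)" and t: "3 \<le> t"
    and small: "real t powr q \<le> real t / (20 * ln (real t) powr a)"
  shows "SS a t \<le> (11/10) * (real t / ln (real t) powr a)"
proof -
  define s where "s = real t powr q"
  have q0: "0 < q" using q by simp
  have lt: "1 \<le> ln (real t)" using ln_ge1[of t] t by simp
  have p: "0 < ln (real t) powr a" using lt by simp
  have qa: "q powr (- a) = 21/20" unfolding q powr_powr using a by simp
  have tb: "pp a i \<le> (if real i \<le> s then 1 else 0) + (21/20) * ln (real t) powr (- a)"
    if i: "i \<in> {3..t}" for i
  proof (cases "real i \<le> s")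
    case True
    have h: "pp a i \<le> 1" using pp_bounds[of a i] a i by auto
    have n: "0 \<le> (21/20) * ln (real t) powr (- a)" by simp
    show ?thesis unfolding if_P[OF True] using h n by linarith
  next
    case False
    have spos: "0 < s" unfolding s_def using t by simp
    have "ln s < ln (real i)" using False spos by simp
    then have lq: "q * ln (real t) \<le> ln (real i)" unfolding s_def using t by simp
    have "pp a i = ln (real i) powr (- a)" by (simp add: pp_def)
    also have "\<dots> \<le> (q * ln (real t)) powr (- a)"
      using lq a q0 lt by (intro powr_mono2') auto
    also have "\<dots> = q powr (- a) * ln (real t) powr (- a)"
      using q0 lt by (subst powr_mult) auto
    finally show ?thesis using False qa by simp
  qed
  have "SS a t \<le> (\<Sum>i\<in>{3..t}. (if real i \<le> s then 1 else 0) + (21/20) * ln (real t) powr (- a))"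
    unfolding SS_def by (rule sum_mono) (rule tb)
  also have "\<dots> = real (card {i\<in>{3..t}. real i \<le> s}) + real (t - 2) * ((21/20) * ln (real t) powr (- a))"
    by (simp add: sum.distrib sum.If_cases Int_def)
  also have "real (card {i\<in>{3..t}. real i \<le> s}) \<le> s"
  proof -
    have s0: "0 \<le> s" unfolding s_def by simp
    have "{i\<in>{3..t}. real i \<le> s} \<subseteq> {1..nat \<lfloor>s\<rfloor>}"
    proof
      fix i assume "i \<in> {i\<in>{3..t}. real i \<le> s}"
      then have "3 \<le> i" "real i \<le> s" by auto
      then have "int i \<le> \<lfloor>s\<rfloor>" by (simp add: le_floor_iff)
      then show "i \<in> {1..nat \<lfloor>s\<rfloor>}" using \<open>3 \<le> i\<close> by auto
    qed
    then have "card {i\<in>{3..t}. real i \<le> s} \<le> nat \<lfloor>s\<rfloor>"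
      using card_mono[of "{1..nat \<lfloor>s\<rfloor>}"] by fastforce
    then have "real (card {i\<in>{3..t}. real i \<le> s}) \<le> real (nat \<lfloor>s\<rfloor>)" by simp
    also have "\<dots> \<le> s" using s0 by simp
    finally show ?thesis .
  qed
  also have "real (t - 2) * ((21/20) * ln (real t) powr (- a)) \<le> real t * ((21/20) * (1 / ln (real t) powr a))"
    using lt by (intro mult_mono) (auto simp: powr_minus_divide)
  finally have "SS a t \<le> s + real t * ((21/20) * (1 / ln (real t) powr a))" by simp
  moreover have "s \<le> (1/20) * (real t / ln (real t) powr a)" using small unfolding s_def by simp
  ultimately show ?thesis by (simp add: field_simps)
qed

lemma SS_upper:
  assumes a: "0 < a"
  shows "\<exists>t0. \<forall>t\<ge>t0. SS a t \<le> (11/10) * (real t / ln (real t) powr a)"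
proof -
  define q where "q = (21/20::real) powr (- 1 / a)"
  have q0: "0 < q" unfolding q_def by simp
  have q1: "q < 1" unfolding q_def using a
    by (intro powr_less_one) (auto simp: field_simps)
  have ev: "eventually (\<lambda>x. x powr q \<le> x / (20 * ln x powr a)) at_top"
    using a q0 q1 by real_asymp
  have "eventually (\<lambda>t. real t powr q \<le> real t / (20 * ln (real t) powr a)) sequentially"
    by (rule eventually_compose_filterlim[OF ev filterlim_real_sequentially])
  then obtain t1 where t1: "\<And>t. t \<ge> t1 \<Longrightarrow> real t powr q \<le> real t / (20 * ln (real t) powr a)"
    unfolding eventually_sequentially by blast
  show ?thesis
    by (rule exI[of _ "max t1 3"], intro allI impI, rule SS_upper_aux[OF a q_def]) (use t1 in auto)
qed

lemma colors_take: "t \<le> length (cols G) \<Longrightarrow> colors_at G t = set (take t (cols G))"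
  unfolding colors_at_def by (force simp: in_set_conv_nth)

lemma event_transfer:
  assumes "2 \<le> t" "t \<le> n"
  shows "measure_pmf.prob (sm_gen a d n) {G. P (card (colors_at G t))} = measure_pmf.prob (Kd a d t) {k. P k}"
proof -
  let ?M = "sm_gen a d n"
  have "measure_pmf.prob ?M {G. P (card (colors_at G t))} = measure_pmf.prob ?M ({G. P (card (colors_at G t))} \<inter> set_pmf ?M)"
    by (simp add: measure_Int_set_pmf)
  also have "{G. P (card (colors_at G t))} \<inter> set_pmf ?M = {G. P (card (set (take t (cols G))))} \<inter> set_pmf ?M"
  proof -
    have "colors_at G t = set (take t (cols G))" if "G \<in> set_pmf ?M" for G
      using gen_support[OF that] assms by (intro colors_take) simp
    then show ?thesis by auto
  qed
  also have "measure_pmf.prob ?M \<dots> = measure_pmf.prob ?M {G. P (card (set (take t (cols G))))}"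
    by (simp add: measure_Int_set_pmf)
  also have "\<dots> = measure_pmf.prob (map_pmf (\<lambda>G. take t (cols G)) ?M) {xs. P (card (set xs))}"
    by (simp add: vimage_def)
  also have "\<dots> = measure_pmf.prob (map_pmf cols (sm_gen a d t)) {xs. P (card (set xs))}"
    using gen_prefix[OF assms] by simp
  also have "\<dots> = measure_pmf.prob (Kd a d t) {k. P k}"
    by (simp add: Kd_def vimage_def)
  finally show ?thesis .
qed

lemma bad_bound:
  assumes a: "0 \<le> a" and t: "3 \<le> t" "t \<le> n"
    and S1: "SS a t \<le> (11/10) * (real t / ln (real t) powr a)"
    and S2: "(19/20) * (real t / ln (real t) powr a) \<le> SS a t"
  shows "measure_pmf.prob (sm_gen a d n) {G. \<not> (real t / (2 * ln (real t) powr a) \<le> real (card (colors_at G t)) \<and>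
                 real (card (colors_at G t)) \<le> 2 * real t / ln (real t) powr a)}
     \<le> 5 * exp (- (real t / ln (real t) powr a) / 10)"
proof -
  define m where "m = real t / ln (real t) powr a"
  have lt: "1 \<le> ln (real t)" using ln_ge1[of t] t by simp
  have m0: "0 < m" unfolding m_def using lt t by simp
  have e1: "real t / (2 * ln (real t) powr a) = m / 2" unfolding m_def by simp
  have e2: "2 * real t / ln (real t) powr a = 2 * m" unfolding m_def by simp
  have "measure_pmf.prob (sm_gen a d n) {G. \<not> (real t / (2 * ln (real t) powr a) \<le> real (card (colors_at G t)) \<and>
                 real (card (colors_at G t)) \<le> 2 * real t / ln (real t) powr a)}
      = measure_pmf.prob (Kd a d t) {k. \<not> (m / 2 \<le> real k \<and> real k \<le> 2 * m)}"
    unfolding e1 e2 using t by (intro event_transfer) auto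
  also have "\<dots> \<le> measure_pmf.prob (Kd a d t) ({k. real k < m / 2} \<union> {k. 2 * m < real k})"
    by (rule measure_pmf.finite_measure_mono) auto
  also have "\<dots> \<le> measure_pmf.prob (Kd a d t) {k. real k < m / 2} + measure_pmf.prob (Kd a d t) {k. 2 * m < real k}"
    by (rule measure_subadditive) (auto simp: measure_pmf.emeasure_eq_measure)
  also have "\<dots> \<le> exp (- m / 10) + 4 * exp (- m / 10)"
    using lower_tail[OF a _ m0, of t d] upper_tail[OF a _ m0, of t d] S1 S2 t unfolding m_def
    by (intro add_mono) auto
  finally show ?thesis unfolding m_def by simp
qed

lemma geom_bound:
  fixes r :: real
  assumes "0 \<le> r" "r < 1"
  shows "(\<Sum>t\<in>{N..n}. r ^ t) \<le> r ^ N / (1 - r)"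
proof -
  have "(\<Sum>t\<in>{N..n}. r ^ t) \<le> (\<Sum>t\<in>{0 + N..<(n + 1) + N}. r ^ t)"
    using assms by (intro sum_mono2) auto
  also have "\<dots> = (\<Sum>j\<in>{0..<n + 1}. r ^ (j + N))" by (rule sum.shift_bounds_nat_ivl)
  also have "\<dots> = (\<Sum>j<n + 1. r ^ j) * r ^ N"
    unfolding atLeast0LessThan power_add sum_distrib_right ..
  also have "(\<Sum>j<n + 1. r ^ j) = (1 - r ^ (n + 1)) / (1 - r)"
    using assms by (subst sum_gp_strict) auto
  also have "\<dots> * r ^ N \<le> r ^ N / (1 - r)"
  proof -
    have h: "0 \<le> r ^ (n + 1) * r ^ N" using assms by simp
    have "(1 - r ^ (n + 1)) * r ^ N = r ^ N - r ^ (n + 1) * r ^ N" by (simp only: left_diff_distrib mult_1)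
    then have "(1 - r ^ (n + 1)) * r ^ N \<le> r ^ N" using h by linarith
    then have "(1 - r ^ (n + 1)) * r ^ N / (1 - r) \<le> r ^ N / (1 - r)"
      using assms by (intro divide_right_mono) auto
    then show ?thesis by simp
  qed
  finally show ?thesis by simp
qed

lemma main_bound:
  fixes a :: real and d n :: nat and T0 :: nat
  assumes a: "0 < a" and T0: "40 \<le> T0"
    and SSb: "\<And>t. t \<ge> T0 \<Longrightarrow> SS a t \<le> (11/10) * (real t / ln (real t) powr a)"
    and n3: "3 \<le> n" and T1: "real T0 \<le> ln (real n) powr (a + 1)"
  shows "1 - 5 * exp (- ln (real n) / 10) * (1 + 10 * ln (real n) powr a) \<le>
    measure_pmf.prob (sm_gen a d n)
            {G. \<forall>t::nat. ln (real n) powr (a + 1) \<le> real t \<and> t \<le> n \<longrightarrow>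
                 real t / (2 * ln (real t) powr a) \<le> real (card (colors_at G t)) \<and>
                 real (card (colors_at G t)) \<le> 2 * real t / ln (real t) powr a}"
proof -
  let ?M = "sm_gen a d n"
  let ?T1 = "ln (real n) powr (a + 1)"
  define L where "L = ln (real n) powr a"
  define c where "c = 1 / (10 * L)"
  define A where "A = {t. ?T1 \<le> real t \<and> t \<le> n}"
  define bad where "bad t = {G. \<not> (real t / (2 * ln (real t) powr a) \<le> real (card (colors_at G t)) \<and>
                 real (card (colors_at G t)) \<le> 2 * real t / ln (real t) powr a)}" for t
  define E where "E = {G. \<forall>t::nat. ?T1 \<le> real t \<and> t \<le> n \<longrightarrow>
                 real t / (2 * ln (real t) powr a) \<le> real (card (colors_at G t)) \<and>
                 real (card (colors_at G t)) \<le> 2 * real t / ln (real t) powr a}"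
  define N where "N = nat \<lceil>?T1\<rceil>"
  have ln1: "1 \<le> ln (real n)" using ln_ge1[OF n3] .
  have L1: "1 \<le> L" unfolding L_def using ln1 a by (intro ge_one_powr_ge_zero) auto
  have c0: "0 < c" unfolding c_def using L1 by simp
  have finA: "finite A" unfolding A_def by (rule finite_subset[of _ "{..n}"]) auto
  have At: "40 \<le> t" "t0 \<le> t" if "t \<in> A" "T0 \<ge> t0" for t t0
    using that T0 T1 unfolding A_def by auto
  have compl: "UNIV - E \<subseteq> (\<Union>t\<in>A. bad t)" unfolding E_def A_def bad_def by auto
  have "measure_pmf.prob ?M (UNIV - E) \<le> measure_pmf.prob ?M (\<Union>t\<in>A. bad t)"
    using compl by (intro measure_pmf.finite_measure_mono) auto
  also have "\<dots> \<le> (\<Sum>t\<in>A. measure_pmf.prob ?M (bad t))"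
    using finA by (intro measure_pmf.finite_measure_subadditive_finite) auto
  also have "\<dots> \<le> (\<Sum>t\<in>A. 5 * exp (- c) ^ t)"
  proof (rule sum_mono)
    fix t assume tA: "t \<in> A"
    have t40: "40 \<le> t" and tT: "T0 \<le> t" using At[OF tA] by auto
    have tn: "t \<le> n" using tA unfolding A_def by auto
    have lt: "1 \<le> ln (real t)" using ln_ge1[of t] t40 by simp
    have "measure_pmf.prob ?M (bad t) \<le> 5 * exp (- (real t / ln (real t) powr a) / 10)"
      unfolding bad_def using a t40 tn SSb[OF tT] SS_lower[of a t]
      by (intro bad_bound) auto
    also have "\<dots> \<le> 5 * exp (- c * real t)"
    proof -
      have "ln (real t) \<le> ln (real n)" using tn t40 by (subst ln_le_cancel_iff) auto
      then have "ln (real t) powr a \<le> L" unfolding L_def using a lt by (intro powr_mono2) auto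
      moreover have "0 < ln (real t) powr a" "0 < L" using lt L1 by auto
      ultimately have "real t / L \<le> real t / ln (real t) powr a" by (intro divide_left_mono) auto
      then have "c * real t \<le> (real t / ln (real t) powr a) / 10" unfolding c_def by simp
      then show ?thesis by simp
    qed
    also have "\<dots> = 5 * exp (- c) ^ t" by (simp add: exp_of_nat_mult[symmetric] mult.commute)
    finally show "measure_pmf.prob ?M (bad t) \<le> 5 * exp (- c) ^ t" .
  qed
  also have "\<dots> \<le> (\<Sum>t\<in>{N..n}. 5 * exp (- c) ^ t)"
  proof (rule sum_mono2)
    show "A \<subseteq> {N..n}"
    proof
      fix t assume "t \<in> A"
      then have "?T1 \<le> real t" "t \<le> n" unfolding A_def by auto
      then show "t \<in> {N..n}" unfolding N_def by (auto simp: nat_le_iff ceiling_le_iff)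
    qed
  qed auto
  also have "\<dots> = 5 * (\<Sum>t\<in>{N..n}. exp (- c) ^ t)" by (simp add: sum_distrib_left)
  also have "\<dots> \<le> 5 * (exp (- c) ^ N / (1 - exp (- c)))"
    using c0 by (intro mult_left_mono geom_bound) auto
  also have "\<dots> \<le> 5 * (exp (- ln (real n) / 10) * (1 + 10 * L))"
  proof -
    have "exp (- c) ^ N = exp (- c * real N)" by (simp add: exp_of_nat_mult[symmetric] mult.commute)
    also have "\<dots> \<le> exp (- (c * ?T1))"
    proof -
      have "?T1 \<le> real N" unfolding N_def by linarith
      then show ?thesis using c0 by simp
    qed
    finally have ea: "exp (- c) ^ N \<le> exp (- (c * ?T1))" .
    have eb: "c * ?T1 = ln (real n) / 10"
    proof -
      have "?T1 = L * ln (real n)" unfolding L_def using ln1 by (simp add: powr_add)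
      then show ?thesis unfolding c_def using L1 by simp
    qed
    have e1: "exp (- c) ^ N \<le> exp (- ln (real n) / 10)" using ea unfolding eb by simp
    have e2: "1 / (1 - exp (- c)) \<le> 1 + 10 * L"
    proof -
      have "1 + c \<le> exp c" by (rule exp_ge_add_one_self)
      then have "exp (- c) \<le> 1 / (1 + c)" using c0 by (simp add: exp_minus field_simps)
      then have "c / (1 + c) \<le> 1 - exp (- c)" using c0 by (simp add: field_simps)
      moreover have "0 < c / (1 + c)" using c0 by simp
      ultimately have pr: "0 < (1 - exp (- c)) * (c / (1 + c))" 
        by (intro mult_pos_pos) linarith+
      have "1 / (1 - exp (- c)) \<le> 1 / (c / (1 + c))"
        by (rule divide_left_mono[OF \<open>c / (1 + c) \<le> 1 - exp (- c)\<close> _ pr]) simp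
      also have "\<dots> = 1 + 10 * L" unfolding c_def using L1 by (simp add: field_simps)
      finally show ?thesis .
    qed
    have "exp (- c) ^ N / (1 - exp (- c)) = exp (- c) ^ N * (1 / (1 - exp (- c)))" by simp
    also have "\<dots> \<le> exp (- ln (real n) / 10) * (1 + 10 * L)"
      using e1 e2 c0 by (intro mult_mono) auto
    finally show ?thesis by simp
  qed
  finally have "measure_pmf.prob ?M (UNIV - E) \<le> 5 * exp (- ln (real n) / 10) * (1 + 10 * L)" by simp
  moreover have "measure_pmf.prob ?M (UNIV - E) = 1 - measure_pmf.prob ?M E"
    using measure_pmf.prob_compl[of E ?M] by simp
  ultimately show ?thesis unfolding E_def L_def by simp
qed

theorem lemma2:
  fixes a :: real and d :: nat
  assumes "a > 1" and "d \<ge> 4"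
  shows "(\<lambda>n. measure_pmf.prob (sm_gen a d n)
            {G. \<forall>t::nat. ln (real n) powr (a + 1) \<le> real t \<and> t \<le> n \<longrightarrow>
                 real t / (2 * ln (real t) powr a) \<le> real (card (colors_at G t)) \<and>
                 real (card (colors_at G t)) \<le> 2 * real t / ln (real t) powr a})
         \<longlonglongrightarrow> 1"
proof -
  have a: "0 < a" using assms(1) by simp
  obtain t0 where t0: "\<And>t. t \<ge> t0 \<Longrightarrow> SS a t \<le> (11/10) * (real t / ln (real t) powr a)"
    using SS_upper[OF a] by blast
  define T0 where "T0 = max t0 40"
  have T0: "40 \<le> T0" unfolding T0_def by simp
  have SSb: "\<And>t. t \<ge> T0 \<Longrightarrow> SS a t \<le> (11/10) * (real t / ln (real t) powr a)"
    using t0 unfolding T0_def by auto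
  define f where "f x = 5 * exp (- ln x / 10) * (1 + 10 * ln x powr a)" for x :: real
  have fl: "(f \<longlongrightarrow> 0) at_top" unfolding f_def using a by real_asymp
  have fl': "(\<lambda>n. f (real n)) \<longlonglongrightarrow> 0"
    by (rule filterlim_compose[OF fl filterlim_real_sequentially])
  have evT: "eventually (\<lambda>x. real T0 \<le> ln x powr (a + 1)) at_top" using a by real_asymp
  have evT': "eventually (\<lambda>n. real T0 \<le> ln (real n) powr (a + 1)) sequentially"
    by (rule eventually_compose_filterlim[OF evT filterlim_real_sequentially])
  have ev3: "eventually (\<lambda>n. 3 \<le> n) sequentially" by (rule eventually_ge_at_top)
  show ?thesis
  proof (rule tendsto_sandwich[where f = "\<lambda>n. 1 - f (real n)" and h = "\<lambda>n. 1"])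
    show "eventually (\<lambda>n. 1 - f (real n) \<le> measure_pmf.prob (sm_gen a d n)
            {G. \<forall>t::nat. ln (real n) powr (a + 1) \<le> real t \<and> t \<le> n \<longrightarrow>
                 real t / (2 * ln (real t) powr a) \<le> real (card (colors_at G t)) \<and>
                 real (card (colors_at G t)) \<le> 2 * real t / ln (real t) powr a}) sequentially"
      using evT' ev3
    proof eventually_elim
      case (elim n)
      then show ?case unfolding f_def using main_bound[OF a T0 SSb, of n d] by simp
    qed
    show "eventually (\<lambda>n. measure_pmf.prob (sm_gen a d n)
            {G. \<forall>t::nat. ln (real n) powr (a + 1) \<le> real t \<and> t \<le> n \<longrightarrow>
                 real t / (2 * ln (real t) powr a) \<le> real (card (colors_at G t)) \<and>
                 real (card (colors_at G t)) \<le> 2 * real t / ln (real t) powr a} \<le> 1) sequentially"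
      by simp
    show "(\<lambda>n. 1 - f (real n)) \<longlonglongrightarrow> 1" using tendsto_diff[OF tendsto_const fl', of 1] by simp
  qed simp
qed

end
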